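(* In the setting below, assume that $g(x)$ and $l(x)$ are both self-reciprocal. If $\gcd\big(r_{22}(x),\ g_{11}(x)\bar g_{11}(x)+g_{12}(x)\bar g_{12}(x)\big)\neq 1$, then $C$ is not Euclidean LCD.
   Context: Let $q$ be a prime power, $F=\mathbb{F}_q$, $m\ge1$ with $\gcd(q,m)=1$, and $R=F[x]/\langle x^m-1\rangle$; elements of $R$ are represented by polynomials of degree $<m$ and identified with their coefficient vectors in $F^m$. A quasi-cyclic code of length $2m$ and index $2$ is an $R$-submodule $C\subseteq R^2$. The Euclidean inner product of $(a_1,a_2),(b_1,b_2)\in R^2$ is the sum of the standard dot products of the coefficient vectors of $a_1,b_1$ and of $a_2,b_2$; $C$ is Euclidean LCD if $C\cap C^{\perp_e}=\{0\}$. For a nonzero polynomial $f$ of degree $k$, $f^*(x)=x^kf(x^{-1})$; $f$ is self-reciprocal if $f^*=\alpha f$ for some $\alpha\in F$. For a polynomial $f$ of degree at most $m$, $\bar f(x)=x^m f(x^{-1})$. Suppose $C$ is generated as an $R$-module by $(g_{11}(x),g_{12}(x))$ and $(0,g_{22}(x))$, where $g_{11},g_{12},g_{22}\in F[x]$ satisfy: $g_{11}\mid x^m-1$, $g_{22}\mid x^m-1$, $\deg g_{12}<\deg g_{22}$, and $g_{11}g_{22}\mid (x^m-1)g_{12}$. Define $g=\gcd(g_{11},g_{22})$, $l=(x^m-1)/\mathrm{lcm}(g_{11},g_{22})$, $g_{22}=g\,g_{22}'$, $r_{22}=\gcd(g_{22}',g_{22}'^* )$. *)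

theory Defs
  imports "HOL-Computational_Algebra.Computational_Algebra"
begin

definition xm1 :: "nat \<Rightarrow> 'a::comm_ring_1 poly" where
  "xm1 m = monom 1 m - 1"

text \<open>R = F[x]/(x^m-1), represented by polynomials of degree < m (m \<ge> 1).\<close>
definition Rset :: "nat \<Rightarrow> 'a::zero poly set" where
  "Rset m = {p. degree p < m}"

text \<open>The R-submodule of R^2 generated by (g11,g12) and (0,g22): all R-linear
  combinations r1*(g11,g12) + r2*(0,g22), with products reduced mod x^m-1.\<close>
definition qc_code :: "nat \<Rightarrow> 'a::field poly \<Rightarrow> 'a poly \<Rightarrow> 'a poly \<Rightarrow> ('a poly \<times> 'a poly) set" where
  "qc_code m g11 g12 g22 =
     {((r1 * g11) mod xm1 m, (r1 * g12 + r2 * g22) mod xm1 m) | r1 r2.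
        r1 \<in> Rset m \<and> r2 \<in> Rset m}"

definition euc_inner :: "nat \<Rightarrow> ('a::comm_ring_1 poly \<times> 'a poly) \<Rightarrow> ('a poly \<times> 'a poly) \<Rightarrow> 'a" where
  "euc_inner m u v =
     (\<Sum>i<m. coeff (fst u) i * coeff (fst v) i) + (\<Sum>i<m. coeff (snd u) i * coeff (snd v) i)"

definition euc_dual :: "nat \<Rightarrow> ('a::comm_ring_1 poly \<times> 'a poly) set \<Rightarrow> ('a poly \<times> 'a poly) set" where
  "euc_dual m C = {v. fst v \<in> Rset m \<and> snd v \<in> Rset m \<and> (\<forall>c\<in>C. euc_inner m c v = 0)}"

definition euclidean_LCD :: "nat \<Rightarrow> ('a::comm_ring_1 poly \<times> 'a poly) set \<Rightarrow> bool" where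
  "euclidean_LCD m C \<longleftrightarrow> C \<inter> euc_dual m C = {(0, 0)}"

text \<open>f^*(x) = x^(deg f) f(1/x) is the library's reflect_poly.\<close>
definition self_reciprocal :: "'a::field poly \<Rightarrow> bool" where
  "self_reciprocal f \<longleftrightarrow> f \<noteq> 0 \<and> (\<exists>\<alpha>. reflect_poly f = smult \<alpha> f)"

text \<open>bar f (x) = x^m f(1/x), for degree f \<le> m.\<close>
definition bar :: "nat \<Rightarrow> 'a::comm_ring_1 poly \<Rightarrow> 'a poly" where
  "bar m f = monom 1 (m - degree f) * reflect_poly f"

end

theory Submission imports Defs "HOL-Number_Theory.Residues" begin
hide_const (open) up_ring.coeff up_ring.monom module.smult


definition ip :: "nat \<Rightarrow> 'a::field poly \<Rightarrow> 'a poly \<Rightarrow> 'a" where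
 "ip m a b = (\<Sum>i<m. coeff (a mod xm1 m) i * coeff (b mod xm1 m) i)"

lemma coeff_xm1: "coeff (xm1 m :: 'a::comm_ring_1 poly) i = (if i = m then 1 else 0) - (if i = 0 then 1 else 0)"
  by (simp add: xm1_def coeff_monom)

lemma xm1_deg: "m \<ge> 1 \<Longrightarrow> degree (xm1 m :: 'a::field poly) = m"
proof -
  assume m: "m \<ge> 1"
  have "degree (xm1 m :: 'a poly) \<le> m" unfolding xm1_def
    by (rule degree_diff_le) (auto simp: degree_monom_le)
  moreover have "coeff (xm1 m :: 'a poly) m \<noteq> 0" using m by (simp add: coeff_xm1)
  hence "m \<le> degree (xm1 m :: 'a poly)" by (rule le_degree)
  ultimately show ?thesis by simp
qed

lemma xm1_nz: "m \<ge> 1 \<Longrightarrow> xm1 m \<noteq> (0::'a::field poly)"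
  using xm1_deg[of m] by (metis degree_0 not_one_le_zero)

lemma ip_mod1: "ip m (a mod xm1 m) b = ip m a b" by (simp add: ip_def)
lemma ip_mod2: "ip m a (b mod xm1 m) = ip m a b" by (simp add: ip_def)

lemma ip_add1: "ip m (a + a') b = ip m a b + ip m a' b"
  by (simp add: ip_def poly_mod_add_left sum.distrib distrib_right)
lemma ip_add2: "ip m b (a + a') = ip m b a + ip m b a'"
  by (simp add: ip_def poly_mod_add_left sum.distrib distrib_left)
lemma ip_smult1: "ip m (smult c a) b = c * ip m a b"
  by (simp add: ip_def mod_smult_left sum_distrib_left mult.assoc)
lemma ip_smult2: "ip m b (smult c a) = c * ip m b a"
  by (simp add: ip_def mod_smult_left sum_distrib_left mult.left_commute)
lemma ip_zero1: "ip m 0 b = 0" by (simp add: ip_def)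
lemma ip_zero2: "ip m b 0 = 0" by (simp add: ip_def)

lemma ip_sum1: "finite A \<Longrightarrow> ip m (sum f A) b = (\<Sum>k\<in>A. ip m (f k) b)"
  by (induction A rule: finite_induct) (auto simp: ip_zero1 ip_add1)
lemma ip_sum2: "finite A \<Longrightarrow> ip m b (sum f A) = (\<Sum>k\<in>A. ip m b (f k))"
  by (induction A rule: finite_induct) (auto simp: ip_zero2 ip_add2)

lemma ip_dvd2: "xm1 m dvd b \<Longrightarrow> ip m a b = 0"
  by (simp add: ip_def)

lemma shift_mod:
  fixes a :: "'a::field poly"
  assumes m: "m \<ge> 1"
  shows "(monom 1 1 * a) mod xm1 m = monom 1 1 * (a mod xm1 m) - smult (coeff (a mod xm1 m) (m-1)) (xm1 m)"
proof -
  define X where "X = (xm1 m :: 'a poly)"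
  define a0 where "a0 = a mod X"
  define c where "c = coeff a0 (m-1)"
  define t where "t = monom 1 1 * a0 - smult c X"
  have X0: "X \<noteq> 0" and dX: "degree X = m" using m by (auto simp: X_def xm1_nz xm1_deg)
  have da0: "degree a0 < m \<or> a0 = 0" using degree_mod_less[OF X0, of a] dX a0_def by auto
  have ca0: "\<And>j. j \<ge> m \<Longrightarrow> coeff a0 j = 0"
    using da0 by (metis coeff_0 coeff_eq_0 le_less_trans not_le)
  have "\<forall>i>m-1. coeff t i = 0"
  proof (intro allI impI)
    fix i assume "i > m - 1"
    hence i: "i \<ge> m" using m by auto
    show "coeff t i = 0"
    proof (cases "i = m")
      case True thus ?thesis using m unfolding t_def c_def X_def
        by (simp add: coeff_monom_mult coeff_xm1)
    next
      case False thus ?thesis using m i ca0[of "i-1"] unfolding t_def c_def X_def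
        by (simp add: coeff_monom_mult coeff_xm1)
    qed
  qed
  hence "degree t \<le> m - 1" by (rule degree_le)
  hence dt: "degree t < degree X" using m dX by auto
  have "(monom 1 1 * a) mod X = (monom 1 1 * a0) mod X"
    unfolding a0_def by (simp add: mod_mult_right_eq)
  also have "monom 1 1 * a0 = t + [:c:] * X" by (simp add: t_def)
  also have "(t + [:c:] * X) mod X = t" by (simp only: mod_mult_self1 mod_poly_less[OF dt])
  finally show ?thesis by (simp add: t_def c_def a0_def X_def)
qed

lemma ip_shift:
  fixes a b :: "'a::field poly"
  assumes m: "m \<ge> 1"
  shows "ip m (monom 1 1 * a) (monom 1 1 * b) = ip m a b"
proof -
  obtain n where n: "m = Suc n" using m by (cases m) auto
  define a0 where "a0 = a mod xm1 m"
  define b0 where "b0 = b mod xm1 m"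
  have "ip m (monom 1 1 * a) (monom 1 1 * b) =
     (\<Sum>i<Suc n. coeff (monom 1 1 * a0 - smult (coeff a0 n) (xm1 m)) i *
                  coeff (monom 1 1 * b0 - smult (coeff b0 n) (xm1 m)) i)"
    using shift_mod[OF m, of a] shift_mod[OF m, of b] unfolding ip_def a0_def b0_def n by simp
  also have "\<dots> = coeff a0 n * coeff b0 n + (\<Sum>i<n. coeff a0 i * coeff b0 i)"
    unfolding sum.lessThan_Suc_shift using n
    by (simp add: coeff_monom_mult coeff_xm1)
  also have "\<dots> = ip m a b" unfolding ip_def a0_def b0_def n by simp
  finally show ?thesis .
qed

lemma ip_shiftk:
  fixes a b :: "'a::field poly"
  assumes m: "m \<ge> 1"
  shows "ip m (monom 1 k * a) (monom 1 k * b) = ip m a b"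
proof (induction k)
  case 0 thus ?case by (simp add: monom_0 one_pCons[symmetric])
next
  case (Suc k)
  have e: "monom (1::'a) (Suc k) = monom 1 1 * monom 1 k" by (simp add: mult_monom)
  show ?case unfolding e mult.assoc ip_shift[OF m] Suc ..
qed

lemma ip_movek:
  fixes a b :: "'a::field poly"
  assumes m: "m \<ge> 1" and k: "k \<le> m"
  shows "ip m (monom 1 k * a) b = ip m a (monom 1 (m-k) * b)"
proof -
  have "monom 1 m * b = b + b * xm1 m" by (simp add: xm1_def algebra_simps)
  hence "(monom 1 m * b) mod xm1 m = b mod xm1 m" by simp
  hence "ip m (monom 1 k * a) b = ip m (monom 1 k * a) (monom 1 m * b)"
    by (metis ip_mod2)
  also have "monom (1::'a) m = monom 1 k * monom 1 (m-k)" using k by (simp add: mult_monom)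
  also have "ip m (monom 1 k * a) (monom 1 k * monom 1 (m - k) * b) = ip m a (monom 1 (m-k) * b)"
    by (simp add: mult.assoc ip_shiftk[OF m])
  finally show ?thesis .
qed

lemma bar_sum:
  fixes p :: "'a::comm_ring_1 poly"
  assumes d: "degree p \<le> m"
  shows "bar m p = (\<Sum>k\<le>degree p. monom (coeff p k) (m-k))"
proof (rule poly_eqI)
  fix j
  define d where "d = degree p"
  have "coeff (\<Sum>k\<le>degree p. monom (coeff p k) (m-k)) j =
        (\<Sum>k\<le>d. if k = m - j \<and> j \<le> m then coeff p k else 0)"
    unfolding coeff_sum d_def using d
    by (intro sum.cong refl) (auto simp: coeff_monom)
  also have "\<dots> = (if m - j \<le> d \<and> j \<le> m then coeff p (m - j) else 0)"
    by (cases "j \<le> m") (simp_all add: sum.delta)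
  also have "\<dots> = coeff (bar m p) j"
    unfolding bar_def coeff_monom_mult coeff_reflect_poly d_def[symmetric] using d d_def
    by (auto simp: not_less)
  finally show "coeff (bar m p) j = coeff (\<Sum>k\<le>degree p. monom (coeff p k) (m-k)) j" by simp
qed

lemma ip_move:
  fixes p a b :: "'a::field poly"
  assumes m: "m \<ge> 1" and d: "degree p \<le> m"
  shows "ip m (p * a) b = ip m a (bar m p * b)"
proof -
  have "p * a = (\<Sum>k\<le>degree p. smult (coeff p k) (monom 1 k * a))"
    by (subst (1) poly_as_sum_of_monoms[symmetric])
       (simp add: sum_distrib_right smult_monom_mult)
  hence "ip m (p * a) b = (\<Sum>k\<le>degree p. coeff p k * ip m (monom 1 k * a) b)"
    by (simp add: ip_sum1 ip_smult1)
  also have "\<dots> = (\<Sum>k\<le>degree p. coeff p k * ip m a (monom 1 (m-k) * b))"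
    using d by (intro sum.cong refl) (simp add: ip_movek[OF m])
  also have "\<dots> = ip m a (\<Sum>k\<le>degree p. smult (coeff p k) (monom 1 (m-k) * b))"
    by (simp add: ip_sum2 ip_smult2)
  also have "(\<Sum>k\<le>degree p. smult (coeff p k) (monom 1 (m-k) * b)) = bar m p * b"
    unfolding bar_sum[OF d] by (simp add: sum_distrib_right smult_monom_mult)
  finally show ?thesis .
qed

lemma of_nat_m_nz:
  assumes "coprime (card (UNIV :: 'a::{field,finite} set)) m"
  shows "(of_nat m :: 'a) \<noteq> 0"
proof
  assume "(of_nat m :: 'a) = 0"
  hence "CHAR('a) dvd m" by (simp add: of_nat_eq_0_iff_char_dvd)
  moreover have "CHAR('a) dvd card (UNIV :: 'a set)" by (rule CHAR_dvd_CARD)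
  ultimately have "CHAR('a) = 1" using assms coprime_common_divisor_nat by blast
  hence "(of_nat 1 :: 'a) = 0" by (metis of_nat_CHAR)
  thus False by simp
qed

lemma sqfree_xm1:
  fixes k :: "'a::{field,finite} poly"
  assumes m: "m \<ge> 1" and cp: "coprime (card (UNIV :: 'a set)) m"
    and kk: "k * k dvd xm1 m"
  shows "is_unit k"
proof -
  obtain w where w: "xm1 m = k * (k * w)" using kk by (metis dvdE mult.assoc)
  have "pderiv (xm1 m) = k * pderiv (k * w) + pderiv k * (k * w)"
    unfolding w by (simp add: pderiv_mult)
  hence d1: "k dvd pderiv (xm1 m)" by (simp add: mult.left_commute)
  have d2: "k dvd xm1 m" using w by simp
  have pd: "pderiv (xm1 m :: 'a poly) = monom (of_nat m) (m-1)"
    by (simp add: xm1_def pderiv_diff pderiv_monom)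
  have "monom 1 1 * pderiv (xm1 m) - smult (of_nat m) (xm1 m) = [:(of_nat m :: 'a):]"
    unfolding pd using m by (simp add: mult_monom xm1_def smult_diff_right smult_monom monom_0)
  moreover have "k dvd monom 1 1 * pderiv (xm1 m) - smult (of_nat m) (xm1 m)"
    using d1 d2 by (intro dvd_diff dvd_mult dvd_smult)
  ultimately have "k dvd [:(of_nat m :: 'a):]" by simp
  moreover have "is_unit [:(of_nat m :: 'a):]" using of_nat_m_nz[OF cp] by (simp add: is_unit_pCons_iff)
  ultimately show ?thesis using dvd_unit_imp_unit by blast
qed

lemma Rset_mod: "m \<ge> 1 \<Longrightarrow> (p :: 'a::field poly) mod xm1 m \<in> Rset m"
proof -
  assume m: "m \<ge> 1"
  have "degree (xm1 m :: 'a poly) = m" using xm1_deg[OF m] .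
  thus ?thesis using degree_mod_less[OF xm1_nz[OF m], of p] m by (auto simp: Rset_def)
qed

theorem lemma3p5:
  fixes m :: nat and g11 g12 g22 :: "'a::{field_gcd,finite} poly"
  assumes "m \<ge> 1"
    and "coprime (card (UNIV :: 'a set)) m"
    and "g11 dvd xm1 m" and "g22 dvd xm1 m"
    and "g12 = 0 \<or> degree g12 < degree g22"
    and "g11 * g22 dvd xm1 m * g12"
    and "self_reciprocal (gcd g11 g22)"
    and "self_reciprocal (xm1 m div lcm g11 g22)"
    and "gcd (gcd (g22 div gcd g11 g22) (reflect_poly (g22 div gcd g11 g22)))
             (g11 * bar m g11 + g12 * bar m g12) \<noteq> 1"
  shows "\<not> euclidean_LCD m (qc_code m g11 g12 g22)"
proof
  assume lcd: "euclidean_LCD m (qc_code m g11 g12 g22)"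
  note m = assms(1)
  define X where "X = (xm1 m :: 'a poly)"
  define g where "g = gcd g11 g22"
  define g' where "g' = g22 div g"
  define S where "S = g11 * bar m g11 + g12 * bar m g12"
  define k where "k = gcd (gcd g' (reflect_poly g')) S"
  have X0: "X \<noteq> 0" and dX: "degree X = m" using m by (auto simp: X_def xm1_nz xm1_deg)
  have ku: "\<not> is_unit k" using assms(9) unfolding k_def g'_def g_def S_def by simp
  have kg': "k dvd g'" and kr: "k dvd reflect_poly g'" and kS: "k dvd S"
    unfolding k_def by (meson gcd_dvd1 gcd_dvd2 dvd_trans)+
  have g22: "g22 = g * g'" unfolding g'_def g_def by simp
  have kg22: "k dvd g22" using kg' g22 by simp
  have kX: "k dvd X" using kg22 assms(4) X_def dvd_trans by blast
  have k0: "k \<noteq> 0" using kX X0 by auto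
  define r where "r = X div k"
  have Xr: "X = k * r" using kX r_def by simp
  have r0: "r \<noteq> 0" using Xr X0 by auto
  have d11: "degree g11 \<le> m" using dvd_imp_degree_le[OF assms(3)[folded X_def] X0] dX by simp
  have d22: "degree g22 \<le> m" using dvd_imp_degree_le[OF assms(4)[folded X_def] X0] dX by simp
  have d12: "degree g12 \<le> m" using assms(5) d22 by auto
  have kbar: "k dvd bar m g22"
    unfolding bar_def g22 reflect_poly_mult using kr by simp
  define v where "v = ((r * g11) mod X, (r * g12) mod X)"
  have vC: "v \<in> qc_code m g11 g12 g22"
    unfolding qc_code_def v_def X_def
    by (rule CollectI, rule exI[of _ "r mod xm1 m"], rule exI[of _ 0])
       (use m in \<open>simp add: Rset_mod[OF m] mod_mult_left_eq, simp add: Rset_def\<close>)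
  have vD: "v \<in> euc_dual m (qc_code m g11 g12 g22)"
    unfolding euc_dual_def
  proof (intro CollectI conjI ballI)
    show "fst v \<in> Rset m" "snd v \<in> Rset m" unfolding v_def X_def by (simp_all add: Rset_mod[OF m])
  next
    fix c assume "c \<in> qc_code m g11 g12 g22"
    then obtain r1 r2 where c: "c = ((r1 * g11) mod X, (r1 * g12 + r2 * g22) mod X)"
      unfolding qc_code_def X_def by blast
    have "euc_inner m c v = ip m (g11 * r1) (r * g11) + ip m (g12 * r1 + g22 * r2) (r * g12)"
      unfolding euc_inner_def ip_def c v_def X_def by (simp add: mult.commute)
    also have "\<dots> = ip m r1 (bar m g11 * (r * g11)) + ip m r1 (bar m g12 * (r * g12))
                 + ip m r2 (bar m g22 * (r * g12))"
      by (simp add: ip_add1 ip_move[OF m d11] ip_move[OF m d12] ip_move[OF m d22])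
    also have "\<dots> = ip m r1 (r * S) + ip m r2 (bar m g22 * (r * g12))"
      unfolding S_def by (simp add: ip_add2[symmetric] algebra_simps)
    also have "\<dots> = 0"
    proof -
      have "xm1 m dvd r * S" using kS unfolding X_def[symmetric] Xr by (simp add: mult.commute)
      moreover have "xm1 m dvd bar m g22 * (r * g12)" using kbar unfolding X_def[symmetric] Xr
        by (simp add: mult_dvd_mono mult.assoc[symmetric])
      ultimately show ?thesis by (simp add: ip_dvd2)
    qed
    finally show "euc_inner m c v = 0" .
  qed
  have v0: "v \<noteq> (0, 0)"
  proof
    assume "v = (0,0)"
    hence "X dvd r * g11" unfolding v_def by (simp add: mod_eq_0_iff_dvd)
    hence "k * r dvd g11 * r" unfolding Xr by (simp add: mult.commute)
    hence "k dvd g11" using r0 by simp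
    hence "k dvd g" unfolding g_def using kg22 by simp
    hence "k * k dvd g * g'" using kg' by (rule mult_dvd_mono)
    hence "k * k dvd xm1 m" using assms(4) g22 by (metis dvd_trans)
    thus False using sqfree_xm1[OF m assms(2)] ku by blast
  qed
  have "v \<in> qc_code m g11 g12 g22 \<inter> euc_dual m (qc_code m g11 g12 g22)" using vC vD by simp
  thus False using lcd v0 unfolding euclidean_LCD_def by simp
qed

end
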